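(* Let $G$ be a connected reflexive graph and let $a,b$ be vertices of $G$ at distance at least $4$ in $G$. Let $G+E$ be the graph obtained from $G$ by adding the edge $E=ab$. Then $H_1(\mathbf{G}+\mathbf{E})\cong H_1(\mathbf{G})\oplus\mathbb{Z}$. More precisely, the map induced by inclusion embeds $H_1(\mathbf{G})$ into $H_1(\mathbf{G}+\mathbf{E})$, and for any closed walk $C$ in $G+E$ that traverses the edge $E$ exactly once, $H_1(\mathbf{G}+\mathbf{E})$ is the direct sum of the image of $H_1(\mathbf{G})$ and the infinite cyclic subgroup generated by $[C]$; in particular, a basis of $H_1(\mathbf{G})$ (when free) together with $[C]$ is a basis of $H_1(\mathbf{G}+\mathbf{E})$.
   Context: A graph is reflexive if every vertex has a loop. For a reflexive graph $G$, its clique complex $\mathbf{G}$ has as $n$-simplices the ordered $(n+1)$-tuples of vertices that are pairwise adjacent or equal; $C_n(\mathbf{G})$ is the free abelian group on the $n$-simplices with boundary $\delta_n[v_0,\dots,v_n]=\sum_i(-1)^i[v_0,\dots,\hat v_i,\dots,v_n]$, and $H_1(\mathbf{G})=\ker\delta_1/\operatorname{im}\delta_2$. A closed walk $(x_0,\dots,x_\ell,x_0)$ is identified with the $1$-cycle $\sum[x_i,x_{i+1}]$ and $[C]$ denotes its homology class. *)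

theory Defs
  imports "HOL-Library.Poly_Mapping"
begin

definition is_graph :: "'a set \<Rightarrow> ('a \<Rightarrow> 'a \<Rightarrow> bool) \<Rightarrow> bool" where
  "is_graph V adj \<longleftrightarrow> (\<forall>x y. adj x y \<longrightarrow> x \<in> V \<and> y \<in> V \<and> adj y x)"

definition reflexive_graph :: "'a set \<Rightarrow> ('a \<Rightarrow> 'a \<Rightarrow> bool) \<Rightarrow> bool" where
  "reflexive_graph V adj \<longleftrightarrow> is_graph V adj \<and> (\<forall>v\<in>V. adj v v)"

definition is_walk :: "'a set \<Rightarrow> ('a \<Rightarrow> 'a \<Rightarrow> bool) \<Rightarrow> 'a list \<Rightarrow> bool" where
  "is_walk V adj xs \<longleftrightarrow> xs \<noteq> [] \<and> set xs \<subseteq> V \<and>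
     (\<forall>i. Suc i < length xs \<longrightarrow> adj (xs ! i) (xs ! Suc i))"

definition graph_connected :: "'a set \<Rightarrow> ('a \<Rightarrow> 'a \<Rightarrow> bool) \<Rightarrow> bool" where
  "graph_connected V adj \<longleftrightarrow>
     (\<forall>x\<in>V. \<forall>y\<in>V. \<exists>xs. is_walk V adj xs \<and> hd xs = x \<and> last xs = y)"

definition graph_dist :: "'a set \<Rightarrow> ('a \<Rightarrow> 'a \<Rightarrow> bool) \<Rightarrow> 'a \<Rightarrow> 'a \<Rightarrow> nat" where
  "graph_dist V adj x y =
     (LEAST k. \<exists>xs. is_walk V adj xs \<and> hd xs = x \<and> last xs = y \<and> length xs = Suc k)"

definition add_edge :: "('a \<Rightarrow> 'a \<Rightarrow> bool) \<Rightarrow> 'a \<Rightarrow> 'a \<Rightarrow> 'a \<Rightarrow> 'a \<Rightarrow> bool" where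
  "add_edge adj a b x y \<longleftrightarrow> adj x y \<or> (x = a \<and> y = b) \<or> (x = b \<and> y = a)"

definition clique_simplex :: "'a set \<Rightarrow> ('a \<Rightarrow> 'a \<Rightarrow> bool) \<Rightarrow> nat \<Rightarrow> 'a list \<Rightarrow> bool" where
  "clique_simplex V adj n \<sigma> \<longleftrightarrow> length \<sigma> = Suc n \<and> set \<sigma> \<subseteq> V \<and>
     (\<forall>x\<in>set \<sigma>. \<forall>y\<in>set \<sigma>. x = y \<or> adj x y)"

definition clique_chain :: "'a set \<Rightarrow> ('a \<Rightarrow> 'a \<Rightarrow> bool) \<Rightarrow> nat \<Rightarrow> ('a list \<Rightarrow>\<^sub>0 int) \<Rightarrow> bool" where
  "clique_chain V adj n c \<longleftrightarrow> (\<forall>\<sigma>\<in>Poly_Mapping.keys c. clique_simplex V adj n \<sigma>)"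

definition del_nth :: "nat \<Rightarrow> 'a list \<Rightarrow> 'a list" where
  "del_nth i xs = take i xs @ drop (Suc i) xs"

definition simplex_boundary :: "('a list \<Rightarrow>\<^sub>0 int) \<Rightarrow> ('a list \<Rightarrow>\<^sub>0 int)" where
  "simplex_boundary = frag_extend
     (\<lambda>\<sigma>. \<Sum>i<length \<sigma>. frag_cmul ((-1) ^ i) (frag_of (del_nth i \<sigma>)))"

definition cycles1 :: "'a set \<Rightarrow> ('a \<Rightarrow> 'a \<Rightarrow> bool) \<Rightarrow> ('a list \<Rightarrow>\<^sub>0 int) set" where
  "cycles1 V adj = {c. clique_chain V adj 1 c \<and> simplex_boundary c = 0}"

definition boundaries1 :: "'a set \<Rightarrow> ('a \<Rightarrow> 'a \<Rightarrow> bool) \<Rightarrow> ('a list \<Rightarrow>\<^sub>0 int) set" where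
  "boundaries1 V adj = {simplex_boundary d | d. clique_chain V adj 2 d}"

text \<open>Closed walk (x_0,...,x_l,x_0) given by the list [x_0,...,x_l].\<close>
definition closed_walk :: "'a set \<Rightarrow> ('a \<Rightarrow> 'a \<Rightarrow> bool) \<Rightarrow> 'a list \<Rightarrow> bool" where
  "closed_walk V adj xs \<longleftrightarrow> is_walk V adj xs \<and> adj (last xs) (hd xs)"

definition walk_chain :: "'a list \<Rightarrow> ('a list \<Rightarrow>\<^sub>0 int)" where
  "walk_chain xs = (\<Sum>i<length xs. frag_of [xs ! i, xs ! (Suc i mod length xs)])"

definition edge_traversals :: "'a list \<Rightarrow> 'a \<Rightarrow> 'a \<Rightarrow> nat" where
  "edge_traversals xs a b =
     card {i. i < length xs \<and> {xs ! i, xs ! (Suc i mod length xs)} = {a, b}}"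

end

theory Submission
  imports Defs
begin


lemma dist_le:
  assumes "is_walk V adj xs" "hd xs = x" "last xs = y"
  shows "graph_dist V adj x y \<le> length xs - 1"
proof -
  have "xs \<noteq> []" using assms(1) by (simp add: is_walk_def)
  then have "\<exists>ys. is_walk V adj ys \<and> hd ys = x \<and> last ys = y \<and> length ys = Suc (length xs - 1)"
    using assms by (intro exI[of _ xs]) auto
  then show ?thesis unfolding graph_dist_def by (rule Least_le)
qed

lemma walk1: "a \<in> V \<Longrightarrow> is_walk V adj [a]"
  by (simp add: is_walk_def)
lemma walk2: "a \<in> V \<Longrightarrow> b \<in> V \<Longrightarrow> adj a b \<Longrightarrow> is_walk V adj [a,b]"
  by (auto simp add: is_walk_def less_Suc_eq)
lemma walk3: "a \<in> V \<Longrightarrow> b \<in> V \<Longrightarrow> c \<in> V \<Longrightarrow> adj a c \<Longrightarrow> adj c b \<Longrightarrow> is_walk V adj [a,c,b]"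
  by (auto simp add: is_walk_def less_Suc_eq)

lemma far_facts:
  assumes "is_graph V adj" "a \<in> V" "b \<in> V" "graph_dist V adj a b \<ge> 4"
  shows "a \<noteq> b" "\<not> adj a b" "\<And>c. \<not> (adj a c \<and> adj c b)"
proof -
  show "a \<noteq> b"
  proof
    assume "a = b"
    then have "graph_dist V adj a b \<le> 0" using dist_le[OF walk1[OF assms(2)], of a b] by simp
    with assms(4) show False by simp
  qed
  show "\<not> adj a b"
  proof
    assume "adj a b"
    then have "graph_dist V adj a b \<le> 1" using dist_le[OF walk2[OF assms(2,3)], of adj a b] by simp
    with assms(4) show False by simp
  qed
  fix c show "\<not> (adj a c \<and> adj c b)"
  proof
    assume h: "adj a c \<and> adj c b"
    then have "c \<in> V" using assms(1) by (auto simp: is_graph_def)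
    then have "graph_dist V adj a b \<le> 2" using h dist_le[OF walk3[OF assms(2,3) \<open>c \<in> V\<close>], of adj a b] by simp
    with assms(4) show False by simp
  qed
qed

lemma bd2: "simplex_boundary (frag_of [x,y]) = frag_of [y] - frag_of [x]"
  by (simp add: simplex_boundary_def lessThan_Suc del_nth_def numeral_2_eq_2)

lemma bd3: "simplex_boundary (frag_of [x,y,z]) = frag_of [y,z] - frag_of [x,z] + frag_of [x,y]"
  by (simp add: simplex_boundary_def lessThan_Suc del_nth_def numeral_3_eq_3 numeral_2_eq_2)

lemma bd_add: "simplex_boundary (c + d) = simplex_boundary c + simplex_boundary d"
  by (simp add: simplex_boundary_def frag_extend_add)
lemma bd_diff: "simplex_boundary (c - d) = simplex_boundary c - simplex_boundary d"
  by (simp add: simplex_boundary_def frag_extend_diff)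
lemma bd_cmul: "simplex_boundary (frag_cmul k c) = frag_cmul k (simplex_boundary c)"
  by (simp add: simplex_boundary_def frag_extend_cmul)
lemma bd_0: "simplex_boundary 0 = 0"
  by (simp add: simplex_boundary_def)

lemma keys_bd: "Poly_Mapping.keys (simplex_boundary c) \<subseteq> {del_nth i \<sigma> | \<sigma> i. \<sigma> \<in> Poly_Mapping.keys c \<and> i < length \<sigma>}"
proof -
  have "Poly_Mapping.keys (\<Sum>i<length \<sigma>. frag_cmul ((-1) ^ i) (frag_of (del_nth i \<sigma>))) \<subseteq> {del_nth i \<sigma> | i. i < length \<sigma>}" for \<sigma> :: "'a list"
  proof
    fix x assume "x \<in> Poly_Mapping.keys (\<Sum>i<length \<sigma>. frag_cmul ((-1) ^ i) (frag_of (del_nth i \<sigma>)))"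
    then obtain i where "i < length \<sigma>" "x \<in> Poly_Mapping.keys (frag_cmul ((-1) ^ i) (frag_of (del_nth i \<sigma>)))"
      using keys_sum[of "\<lambda>i. frag_cmul ((-1) ^ i) (frag_of (del_nth i \<sigma>))" "{..<length \<sigma>}"] by blast
    then show "x \<in> {del_nth i \<sigma> | i. i < length \<sigma>}" by auto
  qed
  then show ?thesis unfolding simplex_boundary_def using keys_frag_extend[of _ c] by (smt (verit) UN_iff mem_Collect_eq subset_iff)
qed

lemma del_nth_set: "set (del_nth i xs) \<subseteq> set xs"
  unfolding del_nth_def using set_take_subset set_drop_subset by fastforce
lemma del_nth_len: "i < length xs \<Longrightarrow> length (del_nth i xs) = length xs - 1"
  unfolding del_nth_def by simp

lemma face_simplex: "clique_simplex V adj (Suc n) \<sigma> \<Longrightarrow> i < length \<sigma> \<Longrightarrow> clique_simplex V adj n (del_nth i \<sigma>)"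
  unfolding clique_simplex_def using del_nth_set[of i \<sigma>] del_nth_len[of i \<sigma>] by auto

lemma bd_chain: "clique_chain V adj (Suc n) c \<Longrightarrow> clique_chain V adj n (simplex_boundary c)"
  unfolding clique_chain_def using keys_bd[of c] face_simplex by blast



locale far =
  fixes V :: "'a set" and adj :: "'a \<Rightarrow> 'a \<Rightarrow> bool" and a b :: 'a
  assumes gr: "is_graph V adj" and aV: "a \<in> V" and bV: "b \<in> V"
    and ab: "a \<noteq> b" and nab: "\<not> adj a b" and nc: "\<And>c. \<not> (adj a c \<and> adj c b)"
begin

abbreviation "adjE \<equiv> add_edge adj a b"

lemma symG: "adj x y \<Longrightarrow> adj y x" using gr by (auto simp: is_graph_def)
lemma symE: "adjE x y \<Longrightarrow> adjE y x" using symG by (auto simp: add_edge_def)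

lemma L_ab: "clique_simplex V adjE n \<sigma> \<Longrightarrow> a \<in> set \<sigma> \<Longrightarrow> b \<in> set \<sigma> \<Longrightarrow> set \<sigma> \<subseteq> {a,b}"
proof
  fix x assume cs: "clique_simplex V adjE n \<sigma>" and "a \<in> set \<sigma>" "b \<in> set \<sigma>" "x \<in> set \<sigma>"
  show "x \<in> {a,b}"
  proof (rule ccontr)
    assume "x \<notin> {a,b}"
    with cs \<open>a \<in> set \<sigma>\<close> \<open>b \<in> set \<sigma>\<close> \<open>x \<in> set \<sigma>\<close> have "adj x a" "adj x b"
      unfolding clique_simplex_def add_edge_def by blast+
    then show False using nc symG by blast
  qed
qed

lemma L_G: "clique_simplex V adjE n \<sigma> \<Longrightarrow> \<not> (a \<in> set \<sigma> \<and> b \<in> set \<sigma>) \<Longrightarrow> clique_simplex V adj n \<sigma>"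
  unfolding clique_simplex_def add_edge_def by blast

lemma G_not_both: "clique_simplex V adj n \<sigma> \<Longrightarrow> a \<in> set \<sigma> \<Longrightarrow> b \<in> set \<sigma> \<Longrightarrow> False"
  unfolding clique_simplex_def using ab nab by blast

lemma G_E: "clique_simplex V adj n \<sigma> \<Longrightarrow> clique_simplex V adjE n \<sigma>"
  unfolding clique_simplex_def add_edge_def by blast

lemma part1:
  assumes z: "clique_chain V adj 1 z" and d: "clique_chain V adjE 2 d" and zd: "simplex_boundary d = z"
  shows "z \<in> boundaries1 V adj"
proof -
  let ?S = "{\<sigma>. clique_simplex V adj 2 \<sigma>}"
  let ?T = "{\<sigma>::'a list. set \<sigma> \<subseteq> {a,b}}"
  have "Poly_Mapping.keys d \<subseteq> ?S \<union> ?T"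
  proof
    fix \<sigma> assume "\<sigma> \<in> Poly_Mapping.keys d"
    then have cs: "clique_simplex V adjE 2 \<sigma>" using d unfolding clique_chain_def by blast
    show "\<sigma> \<in> ?S \<union> ?T"
    proof (cases "a \<in> set \<sigma> \<and> b \<in> set \<sigma>")
      case True then show ?thesis using L_ab[OF cs] by simp
    next
      case False then show ?thesis using L_G[OF cs] by simp
    qed
  qed
  then obtain d1 d2 where d1: "Poly_Mapping.keys d1 \<subseteq> ?S" and d2: "Poly_Mapping.keys d2 \<subseteq> ?T"
    and dd: "d1 + d2 = d" by (rule frag_split)
  define e where "e = simplex_boundary d2"
  have e1: "e = z - simplex_boundary d1" using zd dd bd_add[of d1 d2] unfolding e_def by (metis add_diff_cancel_left')
  have c1: "clique_chain V adj 2 d1" using d1 by (auto simp: clique_chain_def)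
  have "clique_chain V adj 1 (simplex_boundary d1)" using bd_chain[of V adj 1 d1] c1 by (simp add: numeral_2_eq_2)
  have ke1: "Poly_Mapping.keys e \<subseteq> {\<tau>. clique_simplex V adj 1 \<tau>}"
  proof
    fix \<tau> assume "\<tau> \<in> Poly_Mapping.keys e"
    then have "\<tau> \<in> Poly_Mapping.keys z \<or> \<tau> \<in> Poly_Mapping.keys (simplex_boundary d1)"
      using e1 keys_diff[of z "simplex_boundary d1"] by auto
    then show "\<tau> \<in> {\<tau>. clique_simplex V adj 1 \<tau>}"
      using z \<open>clique_chain V adj 1 (simplex_boundary d1)\<close> unfolding clique_chain_def by auto
  qed
  have ke2: "Poly_Mapping.keys e \<subseteq> ?T"
  proof
    fix \<tau> assume "\<tau> \<in> Poly_Mapping.keys e"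
    then obtain \<sigma> i where "\<sigma> \<in> Poly_Mapping.keys d2" "\<tau> = del_nth i \<sigma>"
      using keys_bd[of d2] unfolding e_def by blast
    then show "\<tau> \<in> ?T" using d2 del_nth_set[of i \<sigma>] by auto
  qed
  have ke: "Poly_Mapping.keys e \<subseteq> {[a,a],[b,b]}"
  proof
    fix \<tau> assume t: "\<tau> \<in> Poly_Mapping.keys e"
    then have cs: "clique_simplex V adj 1 \<tau>" and st: "set \<tau> \<subseteq> {a,b}" using ke1 ke2 by auto
    then have "length \<tau> = 2" by (simp add: clique_simplex_def)
    then obtain x y where xy: "\<tau> = [x,y]"
      by (metis (no_types, lifting) One_nat_def Suc_1 length_0_conv length_Suc_conv)
    show "\<tau> \<in> {[a,a],[b,b]}"
    proof -
      have x: "x \<in> {a,b}" and y: "y \<in> {a,b}" using st xy by auto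
      have "\<not> (a \<in> set \<tau> \<and> b \<in> set \<tau>)" using G_not_both[OF cs] by blast
      then have "\<not> (a \<in> {x,y} \<and> b \<in> {x,y})" using xy by simp
      then show ?thesis using x y xy by auto
    qed
  qed
  define \<alpha> where "\<alpha> = Poly_Mapping.lookup e [a,a]"
  define \<beta> where "\<beta> = Poly_Mapping.lookup e [b,b]"
  have eexp: "e = frag_cmul \<alpha> (frag_of [a,a]) + frag_cmul \<beta> (frag_of [b,b])"
  proof (rule poly_mapping_eqI)
    fix x
    show "Poly_Mapping.lookup e x = Poly_Mapping.lookup (frag_cmul \<alpha> (frag_of [a,a]) + frag_cmul \<beta> (frag_of [b,b])) x"
    proof (cases "x = [a,a] \<or> x = [b,b]")
      case True then show ?thesis using ab unfolding \<alpha>_def \<beta>_def by (auto simp: lookup_add)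
    next
      case False
      then have "x \<notin> Poly_Mapping.keys e" using ke by auto
      then show ?thesis using False by (auto simp: lookup_add in_keys_iff)
    qed
  qed
  define d' where "d' = d1 + frag_cmul \<alpha> (frag_of [a,a,a]) + frag_cmul \<beta> (frag_of [b,b,b])"
  have "simplex_boundary d' = simplex_boundary d1 + e"
    unfolding d'_def eexp by (simp add: bd_add bd_cmul bd3)
  also have "\<dots> = z" using e1 by simp
  finally have bz: "simplex_boundary d' = z" .
  have "clique_chain V adj 2 d'"
    unfolding clique_chain_def
  proof
    fix \<sigma> assume "\<sigma> \<in> Poly_Mapping.keys d'"
    then have "\<sigma> \<in> Poly_Mapping.keys d1 \<or> \<sigma> = [a,a,a] \<or> \<sigma> = [b,b,b]"
    proof -
      have "Poly_Mapping.keys d' \<subseteq> Poly_Mapping.keys d1 \<union> Poly_Mapping.keys (frag_cmul \<alpha> (frag_of [a,a,a])) \<union> Poly_Mapping.keys (frag_cmul \<beta> (frag_of [b,b,b]))"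
        unfolding d'_def by (rule order_trans[OF keys_add]) (rule Un_mono[OF keys_add order_refl])
      moreover have "Poly_Mapping.keys (frag_cmul \<alpha> (frag_of [a,a,a])) \<subseteq> {[a,a,a]}"
        using keys_cmul[of \<alpha> "frag_of [a,a,a]"] by simp
      moreover have "Poly_Mapping.keys (frag_cmul \<beta> (frag_of [b,b,b])) \<subseteq> {[b,b,b]}"
        using keys_cmul[of \<beta> "frag_of [b,b,b]"] by simp
      ultimately show ?thesis using \<open>\<sigma> \<in> Poly_Mapping.keys d'\<close> by blast
    qed
    then show "clique_simplex V adj 2 \<sigma>"
      using d1 aV bV by (auto simp: clique_simplex_def numeral_2_eq_2)
  qed
  then show ?thesis using bz unfolding boundaries1_def by blast
qed

end


lemma chain_add: "clique_chain V A n c \<Longrightarrow> clique_chain V A n d \<Longrightarrow> clique_chain V A n (c + d)"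
  unfolding clique_chain_def
proof
  fix \<sigma> assume "\<forall>\<sigma>\<in>Poly_Mapping.keys c. clique_simplex V A n \<sigma>" "\<forall>\<sigma>\<in>Poly_Mapping.keys d. clique_simplex V A n \<sigma>"
    "\<sigma> \<in> Poly_Mapping.keys (c + d)"
  moreover have "\<sigma> \<in> Poly_Mapping.keys c \<union> Poly_Mapping.keys d" using keys_add \<open>\<sigma> \<in> Poly_Mapping.keys (c + d)\<close> by (rule subsetD)
  ultimately show "clique_simplex V A n \<sigma>" by (elim UnE) simp_all
qed
lemma chain_diff: "clique_chain V A n c \<Longrightarrow> clique_chain V A n d \<Longrightarrow> clique_chain V A n (c - d)"
  unfolding clique_chain_def
proof
  fix \<sigma> assume "\<forall>\<sigma>\<in>Poly_Mapping.keys c. clique_simplex V A n \<sigma>" "\<forall>\<sigma>\<in>Poly_Mapping.keys d. clique_simplex V A n \<sigma>"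
    "\<sigma> \<in> Poly_Mapping.keys (c - d)"
  moreover have "\<sigma> \<in> Poly_Mapping.keys c \<union> Poly_Mapping.keys d" using keys_diff \<open>\<sigma> \<in> Poly_Mapping.keys (c - d)\<close> by (rule subsetD)
  ultimately show "clique_simplex V A n \<sigma>" by (elim UnE) simp_all
qed
lemma chain_cmul: "clique_chain V A n c \<Longrightarrow> clique_chain V A n (frag_cmul k c)"
  unfolding clique_chain_def by simp
lemma chain_of: "clique_simplex V A n \<sigma> \<Longrightarrow> clique_chain V A n (frag_of \<sigma>)"
  unfolding clique_chain_def by simp

lemma chain_sum: "(\<And>i. i \<in> I \<Longrightarrow> clique_chain V A n (f i)) \<Longrightarrow> clique_chain V A n (sum f I)"
  unfolding clique_chain_def
proof
  fix \<sigma> assume h: "\<And>i. i \<in> I \<Longrightarrow> \<forall>\<sigma>\<in>Poly_Mapping.keys (f i). clique_simplex V A n \<sigma>"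
    and s: "\<sigma> \<in> Poly_Mapping.keys (sum f I)"
  then obtain i where "i \<in> I" "\<sigma> \<in> Poly_Mapping.keys (f i)" using keys_sum[of f I] by blast
  then show "clique_simplex V A n \<sigma>" using h by blast
qed

lemma bd_sum: "finite I \<Longrightarrow> simplex_boundary (sum f I) = (\<Sum>i\<in>I. simplex_boundary (f i))"
  unfolding simplex_boundary_def by (simp add: frag_extend_sum o_def)

lemma sum_shift_mod:
  assumes "0 < n" shows "(\<Sum>i<n. g (Suc i mod n)) = (\<Sum>i<n. g i)"
proof -
  obtain m where n: "n = Suc m" using assms by (cases n) auto
  have "(\<Sum>i<Suc m. g (Suc i mod Suc m)) = (\<Sum>i<m. g (Suc i mod Suc m)) + g (Suc m mod Suc m)"
    by simp
  also have "(\<Sum>i<m. g (Suc i mod Suc m)) = (\<Sum>i<m. g (Suc i))"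
    by (rule sum.cong) auto
  also have "(\<Sum>i<m. g (Suc i)) + g (Suc m mod Suc m) = (\<Sum>i<Suc m. g i)"
    using sum.lessThan_Suc_shift[of g m] by (simp add: add.commute)
  finally show ?thesis using n by simp
qed

lemma walk_bd: "xs \<noteq> [] \<Longrightarrow> simplex_boundary (walk_chain xs) = 0"
proof -
  assume ne: "xs \<noteq> []"
  let ?n = "length xs"
  have "simplex_boundary (walk_chain xs) = (\<Sum>i<?n. frag_of [xs ! (Suc i mod ?n)] - frag_of [xs ! i])"
    unfolding walk_chain_def by (simp add: bd_sum bd2)
  also have "\<dots> = (\<Sum>i<?n. frag_of [xs ! (Suc i mod ?n)]) - (\<Sum>i<?n. frag_of [xs ! i])"
    by (simp add: sum_subtractf)
  also have "\<dots> = 0"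
    using sum_shift_mod[of ?n "\<lambda>i. frag_of [xs ! i]"] ne by simp
  finally show ?thesis .
qed

lemma lookup_walk: "Poly_Mapping.lookup (walk_chain xs) t = (\<Sum>i<length xs. if t = [xs ! i, xs ! (Suc i mod length xs)] then 1 else 0)"
  unfolding walk_chain_def by (simp add: lookup_sum)

lemma len3: "length \<sigma> = 3 \<Longrightarrow> \<exists>x y w. \<sigma> = [x,y,w]"
  by (auto simp: numeral_3_eq_3 length_Suc_conv)

lemma len2: "length \<sigma> = 2 \<Longrightarrow> \<exists>x y. \<sigma> = [x,y]"
  by (auto simp: numeral_2_eq_2 length_Suc_conv)

context far begin

definition phi :: "('a list \<Rightarrow>\<^sub>0 int) \<Rightarrow> int" where
  "phi c = Poly_Mapping.lookup c [a,b] - Poly_Mapping.lookup c [b,a]"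

lemma phi_add: "phi (c + d) = phi c + phi d"
  by (simp add: phi_def lookup_add)
lemma phi_diff: "phi (c - d) = phi c - phi d"
  by (simp add: phi_def lookup_minus)
lemma phi_cmul: "phi (frag_cmul k c) = k * phi c"
  by (simp add: phi_def algebra_simps)

lemma phi_of: "phi (frag_of [u,v]) = (if [a,b] = [u,v] then 1 else 0) - (if [b,a] = [u,v] then 1 else 0)"
  unfolding phi_def by (simp only: lookup_frag_of)

lemma phi_bd3: "phi (simplex_boundary (frag_of [x,y,w])) =
   phi (frag_of [y,w]) - phi (frag_of [x,w]) + phi (frag_of [x,y])"
  by (simp add: bd3 phi_add phi_diff)

lemma phi_G: "clique_chain V adj n z \<Longrightarrow> phi z = 0"
proof -
  assume z: "clique_chain V adj n z"
  have "[a,b] \<notin> Poly_Mapping.keys z" "[b,a] \<notin> Poly_Mapping.keys z"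
  proof -
    show "[a,b] \<notin> Poly_Mapping.keys z"
    proof
      assume "[a,b] \<in> Poly_Mapping.keys z"
      then have "clique_simplex V adj n [a,b]" using z unfolding clique_chain_def by blast
      then show False using G_not_both[of n "[a,b]"] by simp
    qed
    show "[b,a] \<notin> Poly_Mapping.keys z"
    proof
      assume "[b,a] \<in> Poly_Mapping.keys z"
      then have "clique_simplex V adj n [b,a]" using z unfolding clique_chain_def by blast
      then show False using G_not_both[of n "[b,a]"] by simp
    qed
  qed
  then show ?thesis by (simp add: phi_def in_keys_iff)
qed

lemma phi_sum: "phi (sum g I) = (\<Sum>i\<in>I. phi (g i))"
  by (simp add: phi_def lookup_sum sum_subtractf)

lemma phi_of0: assumes "[a,b] \<noteq> [u,v]" "[b,a] \<noteq> [u,v]" shows "phi (frag_of [u,v]) = 0"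
proof -
  have e: "([a,b] = [u,v]) = False" "([b,a] = [u,v]) = False" using assms by blast+
  show ?thesis unfolding phi_of e by simp
qed

lemma paa: "phi (frag_of [a,a]) = 0" using ab by (simp add: phi_def)
lemma pbb: "phi (frag_of [b,b]) = 0" using ab by (simp add: phi_def)
lemma pab: "phi (frag_of [a,b]) = 1" using ab by (simp add: phi_def)
lemma pba: "phi (frag_of [b,a]) = -1" using ab by (simp add: phi_def)

lemma phi_bd1: assumes cs: "clique_simplex V adjE 2 \<sigma>" shows "phi (simplex_boundary (frag_of \<sigma>)) = 0"
proof -
  have "length \<sigma> = 3" using cs by (simp add: clique_simplex_def)
  then obtain x y w where s: "\<sigma> = [x,y,w]"
    using len3 by blast
  show ?thesis
  proof (cases "a \<in> set \<sigma> \<and> b \<in> set \<sigma>")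
    case True
    have "set \<sigma> \<subseteq> {a,b}" using L_ab[OF cs] True by blast
    moreover have "x \<in> set \<sigma>" "y \<in> set \<sigma>" "w \<in> set \<sigma>" by (simp_all add: s)
    ultimately have hx: "x = a \<or> x = b" and hy: "y = a \<or> y = b" and hw: "w = a \<or> w = b"
      by blast+
    show ?thesis unfolding s phi_bd3
      using hx hy hw by (elim disjE) (simp_all add: paa pbb pab pba)
  next
    case False
    have z: "phi (frag_of [u,v]) = 0" if "u \<in> set \<sigma>" "v \<in> set \<sigma>" for u v
    proof (rule phi_of0)
      show "[a,b] \<noteq> [u,v]"
      proof
        assume "[a,b] = [u,v]"
        then have "u = a" "v = b" by simp_all
        then show False using False that by blast
      qed
      show "[b,a] \<noteq> [u,v]"
      proof
        assume "[b,a] = [u,v]"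
        then have "u = b" "v = a" by simp_all
        then show False using False that by blast
      qed
    qed
    have "phi (frag_of [y,w]) = 0" "phi (frag_of [x,w]) = 0" "phi (frag_of [x,y]) = 0"
      by (rule z; simp add: s)+
    then show ?thesis unfolding s phi_bd3 by simp
  qed
qed

lemma phi_bd: assumes "clique_chain V adjE 2 d" shows "phi (simplex_boundary d) = 0"
proof -
  have "phi (simplex_boundary d) = (\<Sum>\<sigma>\<in>Poly_Mapping.keys d. Poly_Mapping.lookup d \<sigma> * phi (simplex_boundary (frag_of \<sigma>)))"
    unfolding simplex_boundary_def frag_extend_def phi_sum phi_cmul by simp
  also have "\<dots> = 0"
    using assms phi_bd1 unfolding clique_chain_def by simp
  finally show ?thesis .
qed

lemma L1: "clique_simplex V adjE 1 \<tau> \<Longrightarrow> \<tau> \<noteq> [a,b] \<Longrightarrow> \<tau> \<noteq> [b,a] \<Longrightarrow> clique_simplex V adj 1 \<tau>"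
proof -
  assume cs: "clique_simplex V adjE 1 \<tau>" and n1: "\<tau> \<noteq> [a,b]" and n2: "\<tau> \<noteq> [b,a]"
  show ?thesis
  proof (cases "a \<in> set \<tau> \<and> b \<in> set \<tau>")
    case True
    have "length \<tau> = 2" using cs by (simp add: clique_simplex_def)
    then obtain x y where xy: "\<tau> = [x,y]"
      by (metis (no_types, lifting) One_nat_def Suc_1 length_0_conv length_Suc_conv)
    have "a \<in> {x,y}" "b \<in> {x,y}" using True xy by simp_all
    then have "(x = a \<and> y = b) \<or> (x = b \<and> y = a)" using ab by blast
    then have False using n1 n2 xy by blast
    then show ?thesis ..
  next
    case False then show ?thesis using L_G[OF cs] by simp
  qed
qed

lemma walk_chain_E:
  assumes cw: "closed_walk V adjE xs"
  shows "clique_chain V adjE 1 (walk_chain xs)"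
proof -
  let ?n = "length xs"
  have w: "is_walk V adjE xs" and l: "adjE (last xs) (hd xs)" using cw by (auto simp: closed_walk_def)
  then have ne: "xs \<noteq> []" and sV: "set xs \<subseteq> V" by (auto simp: is_walk_def)
  have "clique_simplex V adjE 1 [xs ! i, xs ! (Suc i mod ?n)]" if i: "i < ?n" for i
  proof -
    have m: "Suc i mod ?n < ?n" using ne by simp
    have ed: "adjE (xs ! i) (xs ! (Suc i mod ?n))"
    proof (cases "Suc i < ?n")
      case True then show ?thesis using w by (simp add: is_walk_def)
    next
      case False
      then have "Suc i = ?n" using i by simp
      then have ii: "i = ?n - 1" by simp
      then have "xs ! i = last xs" using ne by (simp add: last_conv_nth)
      moreover have "Suc i mod ?n = 0" using \<open>Suc i = ?n\<close> by simp
      ultimately have "xs ! i = last xs" "Suc i mod ?n = 0" by simp_all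
      then show ?thesis using l ne by (simp add: hd_conv_nth)
    qed
    have "xs ! i \<in> V" "xs ! (Suc i mod ?n) \<in> V" using sV i m nth_mem by blast+
    then show ?thesis using ed symE[OF ed] by (auto simp: clique_simplex_def)
  qed
  then show ?thesis unfolding walk_chain_def
    by (intro chain_sum chain_of) simp
qed

lemma walk_phi:
  assumes cw: "closed_walk V adjE xs" and et: "edge_traversals xs a b = 1"
  shows "phi (walk_chain xs) = 1 \<or> phi (walk_chain xs) = -1"
proof -
  let ?n = "length xs"
  let ?u = "\<lambda>i. xs ! i" and ?v = "\<lambda>i. xs ! (Suc i mod ?n)"
  define g where "g i = (if [a,b] = [?u i, ?v i] then 1 else 0) - (if [b,a] = [?u i, ?v i] then 1 else (0::int))" for i
  have p: "phi (walk_chain xs) = (\<Sum>i<?n. g i)"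
    unfolding phi_def lookup_walk g_def by (simp add: sum_subtractf)
  define A where "A = {i. i < ?n \<and> {?u i, ?v i} = {a,b}}"
  have "card A = 1" using et unfolding A_def edge_traversals_def by simp
  then obtain j where Aj: "A = {j}" by (rule card_1_singletonE)
  have j: "j < ?n" "{?u j, ?v j} = {a,b}" using Aj unfolding A_def by auto
  have "(\<Sum>i<?n. g i) = (\<Sum>i\<in>{j}. g i)"
  proof (rule sum.mono_neutral_right)
    show "\<forall>i\<in>{..<?n} - {j}. g i = 0"
    proof
      fix i assume i: "i \<in> {..<?n} - {j}"
      then have "i \<notin> A" using Aj by auto
      then have "{?u i, ?v i} \<noteq> {a,b}" using i unfolding A_def by auto
      note ne = this
      have e1: "([a,b] = [?u i, ?v i]) = False"
      proof -
        have "\<not> (a = ?u i \<and> b = ?v i)" using ne by auto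
        then show ?thesis by simp
      qed
      have e2: "([b,a] = [?u i, ?v i]) = False"
      proof -
        have "\<not> (b = ?u i \<and> a = ?v i)" using ne by auto
        then show ?thesis by simp
      qed
      show "g i = 0" unfolding g_def e1 e2 by simp
    qed
  qed (use j in auto)
  then have "phi (walk_chain xs) = g j" using p by simp
  moreover have "(?u j = a \<and> ?v j = b) \<or> (?u j = b \<and> ?v j = a)"
    using j(2) by (auto simp: doubleton_eq_iff)
  then have "g j = 1 \<or> g j = -1"
  proof
    assume h: "?u j = a \<and> ?v j = b"
    have "g j = 1" unfolding g_def using h ab by simp
    then show ?thesis ..
  next
    assume h: "?u j = b \<and> ?v j = a"
    have "g j = -1" unfolding g_def using h ab by simp
    then show ?thesis ..
  qed
  ultimately show ?thesis by simp
qed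

lemma part3:
  assumes cw: "closed_walk V adjE xs" and et: "edge_traversals xs a b = 1"
    and z: "z' \<in> cycles1 V adj"
    and bd: "z' + frag_cmul k (walk_chain xs) \<in> boundaries1 V adjE"
  shows "k = 0 \<and> z' \<in> boundaries1 V adj"
proof -
  obtain d where d: "clique_chain V adjE 2 d" and dz: "z' + frag_cmul k (walk_chain xs) = simplex_boundary d"
    using bd unfolding boundaries1_def by blast
  have zc: "clique_chain V adj 1 z'" using z by (simp add: cycles1_def)
  have "phi (z' + frag_cmul k (walk_chain xs)) = 0" using dz phi_bd[OF d] by simp
  then have "k * phi (walk_chain xs) = 0" using phi_G[OF zc] by (simp add: phi_add phi_cmul)
  then have k0: "k = 0" using walk_phi[OF cw et] by auto
  then have "z' = simplex_boundary d" using dz by simp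
  then show ?thesis using k0 part1[OF zc d] by simp
qed

lemma part2:
  assumes cw: "closed_walk V adjE xs" and et: "edge_traversals xs a b = 1"
    and z: "z \<in> cycles1 V adjE"
  shows "\<exists>z' \<in> cycles1 V adj. \<exists>k::int. z - (z' + frag_cmul k (walk_chain xs)) \<in> boundaries1 V adjE"
proof -
  let ?C = "walk_chain xs"
  define s where "s = phi ?C"
  have ss: "s * s = 1" using walk_phi[OF cw et] unfolding s_def by auto
  define k where "k = phi z * s"
  define y where "y = z - frag_cmul k ?C"
  have py: "phi y = 0" unfolding y_def k_def
    by (simp add: phi_diff phi_cmul s_def[symmetric] mult.assoc ss)
  define m where "m = Poly_Mapping.lookup y [a,b]"
  define B where "B = simplex_boundary (frag_of [a,b,a])"
  have Bexp: "B = frag_of [b,a] - frag_of [a,a] + frag_of [a,b]" unfolding B_def by (simp add: bd3)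
  define w where "w = y - frag_cmul m B"
  have zc: "clique_chain V adjE 1 z" and zb: "simplex_boundary z = 0" using z by (auto simp: cycles1_def)
  have ne: "xs \<noteq> []" using cw by (simp add: closed_walk_def is_walk_def)
  have eab: "adjE a b" "adjE b a" by (auto simp: add_edge_def)
  have sab: "clique_simplex V adjE 2 [a,b,a]" using aV bV eab by (auto simp: clique_simplex_def)
  have s1: "clique_simplex V adjE 1 [a,b]" "clique_simplex V adjE 1 [b,a]" "clique_simplex V adjE 1 [a,a]"
    using aV bV eab by (auto simp: clique_simplex_def)
  have wE: "clique_chain V adjE 1 w"
    unfolding w_def y_def Bexp
    by (intro chain_diff chain_cmul chain_add chain_of zc walk_chain_E[OF cw] s1)
  have l1: "Poly_Mapping.lookup w [a,b] = 0"
    unfolding w_def Bexp m_def using ab by (simp add: lookup_add lookup_minus)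
  have l2: "Poly_Mapping.lookup w [b,a] = 0"
    using py unfolding w_def Bexp m_def phi_def using ab by (simp add: lookup_add lookup_minus)
  have wG: "clique_chain V adj 1 w"
    unfolding clique_chain_def
  proof
    fix \<tau> assume t: "\<tau> \<in> Poly_Mapping.keys w"
    then have "\<tau> \<noteq> [a,b]" "\<tau> \<noteq> [b,a]" using l1 l2 by (auto simp: in_keys_iff)
    moreover have "clique_simplex V adjE 1 \<tau>" using wE t by (simp add: clique_chain_def)
    ultimately show "clique_simplex V adj 1 \<tau>" using L1 by blast
  qed
  have "simplex_boundary B = 0" unfolding Bexp by (simp add: bd_add bd_diff bd2)
  then have "simplex_boundary w = 0"
    unfolding w_def y_def by (simp add: bd_diff bd_cmul zb walk_bd[OF ne])
  then have wc: "w \<in> cycles1 V adj" using wG by (simp add: cycles1_def)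
  have "z - (w + frag_cmul k ?C) = simplex_boundary (frag_cmul m (frag_of [a,b,a]))"
    unfolding w_def y_def B_def by (simp add: bd_cmul)
  moreover have "clique_chain V adjE 2 (frag_cmul m (frag_of [a,b,a]))"
    by (intro chain_cmul chain_of sab)
  ultimately have "z - (w + frag_cmul k ?C) \<in> boundaries1 V adjE"
    unfolding boundaries1_def by blast
  then show ?thesis using wc by blast
qed

end

theorem lemma7p4:
  fixes V :: "'a set" and adj :: "'a \<Rightarrow> 'a \<Rightarrow> bool" and a b :: 'a
  assumes "reflexive_graph V adj"
    and "graph_connected V adj"
    and "a \<in> V" and "b \<in> V"
    and "graph_dist V adj a b \<ge> 4"
  shows "(\<forall>z \<in> cycles1 V adj. z \<in> boundaries1 V (add_edge adj a b) \<longrightarrow> z \<in> boundaries1 V adj)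
    \<and> (\<forall>xs. closed_walk V (add_edge adj a b) xs \<and> edge_traversals xs a b = 1 \<longrightarrow>
          (\<forall>z \<in> cycles1 V (add_edge adj a b). \<exists>z' \<in> cycles1 V adj. \<exists>k::int.
              z - (z' + frag_cmul k (walk_chain xs)) \<in> boundaries1 V (add_edge adj a b))
        \<and> (\<forall>z' \<in> cycles1 V adj. \<forall>k::int.
              z' + frag_cmul k (walk_chain xs) \<in> boundaries1 V (add_edge adj a b)
                \<longrightarrow> k = 0 \<and> z' \<in> boundaries1 V adj))"
proof -
  have g: "is_graph V adj" using assms(1) by (simp add: reflexive_graph_def)
  note ff = far_facts[OF g assms(3,4,5)]
  interpret far V adj a b
    using g assms(3,4) ff by unfold_locales blast+
  have p1: "\<forall>z \<in> cycles1 V adj. z \<in> boundaries1 V (add_edge adj a b) \<longrightarrow> z \<in> boundaries1 V adj"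
  proof (intro ballI impI)
    fix z assume z: "z \<in> cycles1 V adj" and zb: "z \<in> boundaries1 V (add_edge adj a b)"
    obtain d where d: "clique_chain V (add_edge adj a b) 2 d" "z = simplex_boundary d"
      using zb unfolding boundaries1_def by blast
    have "clique_chain V adj 1 z" using z by (simp add: cycles1_def)
    then show "z \<in> boundaries1 V adj" using part1 d by simp
  qed
  show ?thesis
    using p1 part2 part3 by blast
qed

end
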